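(* Consider the following slotted system. There are $N\ge2$ users and slots $t=1,\dots,T$. In each slot the BS schedules one user by a deterministic algorithm, whose choice in slot $t$ may depend on the adversary's actions before slot $t$. An adversary uses a blocking matrix $\sigma\in\{0,1\}^{N\times T}$, where $\sigma_i(t)=0$ means user $i$ is blocked in slot $t$. Feasibility means $\sum_{i,t}(1-\sigma_i(t))\le\alpha T$ and at most one user is blocked per slot, where $0<\alpha<1$ and $\alpha T\in\mathbb Z$. Ages satisfy $a_i(1)=1$, $a_i(t+1)=1$ if user $i$ is scheduled and not blocked in slot $t$, and $a_i(t+1)=a_i(t)+1$ otherwise. The average age is $\Delta=\frac1T\sum_{t=1}^T\frac1N\sum_i a_i(t)$. Then for every deterministic scheduling algorithm there exists a feasible blocking matrix under which $\Delta\ge\frac{T\alpha^2}{2}$. *)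

theory Defs
  imports Complex_Main
begin

text \<open>Users are indexed 0,...,N-1, slots 1,...,T.
  A blocking matrix is represented by  blk :: nat => nat => bool  with
  blk i t = True  iff  sigma_i(t) = 0, i.e. user i is blocked in slot t.
  A deterministic scheduling algorithm is a function from the history of the
  adversary's actions (the list of blocking columns of slots 1,...,t-1) to the
  user scheduled in slot t.\<close>

type_synonym blocking = "nat \<Rightarrow> nat \<Rightarrow> bool"
type_synonym algorithm = "(nat \<Rightarrow> bool) list \<Rightarrow> nat"

definition history :: "blocking \<Rightarrow> nat \<Rightarrow> (nat \<Rightarrow> bool) list" where
  "history blk t = map (\<lambda>s i. blk i s) [1..<t]"

definition sched :: "algorithm \<Rightarrow> blocking \<Rightarrow> nat \<Rightarrow> nat" where
  "sched A blk t = A (history blk t)"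

definition feasible :: "nat \<Rightarrow> nat \<Rightarrow> real \<Rightarrow> blocking \<Rightarrow> bool" where
  "feasible N T \<alpha> blk \<longleftrightarrow>
     (\<forall>i t. blk i t \<longrightarrow> i < N \<and> 1 \<le> t \<and> t \<le> T) \<and>
     real (card {(i, t). i < N \<and> t \<in> {1..T} \<and> blk i t}) \<le> \<alpha> * real T \<and>
     (\<forall>t \<in> {1..T}. card {i. i < N \<and> blk i t} \<le> 1)"

text \<open>age A blk i t = a_i(t), for t \<ge> 1 (the value at t = 0 is irrelevant).\<close>
fun age :: "algorithm \<Rightarrow> blocking \<Rightarrow> nat \<Rightarrow> nat \<Rightarrow> nat" where
  "age A blk i 0 = 1"
| "age A blk i (Suc 0) = 1"
| "age A blk i (Suc (Suc t)) =
     (if sched A blk (Suc t) = i \<and> \<not> blk i (Suc t) then 1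
      else age A blk i (Suc t) + 1)"

definition avg_age :: "nat \<Rightarrow> nat \<Rightarrow> algorithm \<Rightarrow> blocking \<Rightarrow> real" where
  "avg_age N T A blk =
     (1 / real T) * (\<Sum>t = 1..T. (1 / real N) * (\<Sum>i < N. real (age A blk i t)))"

end

theory Submission
  imports Defs
begin

fun hst :: "algorithm \<Rightarrow> nat \<Rightarrow> nat \<Rightarrow> (nat \<Rightarrow> bool) list" where
  "hst A K 0 = []"
| "hst A K (Suc n) = hst A K n @ [(\<lambda>i. Suc n \<le> K \<and> i = A (hst A K n))]"

definition advb :: "algorithm \<Rightarrow> nat \<Rightarrow> blocking" where
  "advb A K i t = (1 \<le> t \<and> t \<le> K \<and> i = A (hst A K (t - 1)))"

lemma history_advb: "history (advb A K) (Suc n) = hst A K n"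
proof (induction n)
  case 0
  then show ?case by (simp add: history_def)
next
  case (Suc n)
  have "history (advb A K) (Suc (Suc n)) = history (advb A K) (Suc n) @ [(\<lambda>i. advb A K i (Suc n))]"
    by (simp add: history_def)
  also have "\<dots> = hst A K (Suc n)"
    unfolding Suc.IH hst.simps(2) by (rule arg_cong[where f="\<lambda>x. hst A K n @ [x]"]) (simp add: advb_def fun_eq_iff)
  finally show ?case .
qed

lemma sched_advb: "1 \<le> t \<Longrightarrow> sched A (advb A K) t = A (hst A K (t - 1))"
  using history_advb[of A K "t - 1"] by (simp add: sched_def)

lemma age_advb: "1 \<le> t \<Longrightarrow> t \<le> Suc K \<Longrightarrow> age A (advb A K) i t = t"
proof (induction t)
  case 0
  then show ?case by simp
next
  case (Suc t)
  show ?case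
  proof (cases t)
    case 0
    then show ?thesis by simp
  next
    case (Suc m)
    have b: "advb A K (sched A (advb A K) t) t"
      using Suc.prems Suc sched_advb[of t A K] by (simp add: advb_def)
    have "age A (advb A K) i (Suc t) = age A (advb A K) i t + 1"
      using b Suc by auto
    then show ?thesis using Suc.IH Suc.prems Suc by simp
  qed
qed

theorem lemma1:
  fixes N T :: nat and \<alpha> :: real and A :: algorithm
  assumes "N \<ge> 2"
    and "0 < \<alpha>" and "\<alpha> < 1"
    and "\<alpha> * real T \<in> \<int>"
    and "\<forall>h. A h < N"
  shows "\<exists>blk. feasible N T \<alpha> blk \<and> avg_age N T A blk \<ge> real T * \<alpha>^2 / 2"
proof -
  obtain k where k: "\<alpha> * real T = of_int k" using assms(4) by (auto elim: Ints_cases)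
  have "k \<ge> 0" using k assms(2) by (metis of_int_0_le_iff mult_nonneg_nonneg less_imp_le of_nat_0_le_iff)
  define K where "K = nat k"
  have K: "real K = \<alpha> * real T" using k \<open>k \<ge> 0\<close> by (simp add: K_def)
  have KT: "K \<le> T"
  proof -
    have "\<alpha> * real T \<le> 1 * real T" using assms(3) by (intro mult_right_mono) auto
    then show ?thesis using K by simp
  qed
  let ?b = "advb A K"
  have feas: "feasible N T \<alpha> ?b"
    unfolding feasible_def
  proof (intro conjI allI impI ballI)
    fix i t assume "?b i t"
    then show "i < N" "1 \<le> t" "t \<le> T" using assms(5) KT by (auto simp: advb_def)
  next
    have "{(i, t). i < N \<and> t \<in> {1..T} \<and> ?b i t} \<subseteq> (\<lambda>t. (A (hst A K (t - 1)), t)) ` {1..K}"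
      by (auto simp: advb_def)
    then have "card {(i, t). i < N \<and> t \<in> {1..T} \<and> ?b i t} \<le> card ((\<lambda>t. (A (hst A K (t - 1)), t)) ` {1..K})"
      by (intro card_mono) auto
    also have "\<dots> \<le> K" using card_image_le[of "{1..K}" "(\<lambda>t. (A (hst A K (t - 1)), t))"] by simp
    finally show "real (card {(i, t). i < N \<and> t \<in> {1..T} \<and> ?b i t}) \<le> \<alpha> * real T"
      using K by linarith
  next
    fix t
    have "{i. i < N \<and> ?b i t} \<subseteq> {A (hst A K (t - 1))}" by (auto simp: advb_def)
    then show "card {i. i < N \<and> ?b i t} \<le> 1"
      using card_mono[of "{A (hst A K (t - 1))}"] by fastforce
  qed
  show ?thesis
  proof (intro exI conjI, rule feas)
    show "real T * \<alpha>^2 / 2 \<le> avg_age N T A ?b"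
    proof (cases "T = 0")
      case True
      then show ?thesis by (simp add: avg_age_def)
    next
      case False
      define f where "f t = (1 / real N) * (\<Sum>i < N. real (age A ?b i t))" for t
      have fnn: "f t \<ge> 0" for t unfolding f_def by (intro mult_nonneg_nonneg sum_nonneg) auto
      have fK: "f t = real t" if "t \<in> {1..K}" for t
        using that age_advb[of t K A] assms(1) by (simp add: f_def)
      have "(\<Sum>t = 1..K. f t) \<le> (\<Sum>t = 1..T. f t)"
        using KT fnn by (intro sum_mono2) auto
      moreover have "(\<Sum>t = 1..K. f t) = (\<Sum>t = 1..K. real t)" using fK by simp
      moreover have "(\<Sum>t = 1..K. real t) = real K * (real K + 1) / 2"
      proof (induction K)
        case 0 then show ?case by simp
      next
        case (Suc K) then show ?case by (simp add: field_simps)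
      qed
      moreover have "real K * real K / 2 \<le> real K * (real K + 1) / 2"
        by (intro divide_right_mono mult_left_mono) auto
      ultimately have S: "real K * real K / 2 \<le> (\<Sum>t = 1..T. f t)"
        by linarith
      have "real T * \<alpha>^2 / 2 = (real K * real K / 2) / real T"
        using K False by (simp add: field_simps power2_eq_square)
      also have "\<dots> \<le> (\<Sum>t = 1..T. f t) / real T"
        using S by (rule divide_right_mono) simp
      also have "\<dots> = avg_age N T A ?b" by (simp add: avg_age_def f_def)
      finally show ?thesis .
    qed
  qed
qed

end
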